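(* Let $G$ be a finite graph and let $a\ge 0$, $b\ge 1$ be integers. Then $\phi^a_b(M(G))\ge \phi^{a+b}_{2b}(G)$. Moreover, for every positive integer $t$, $\phi^0_2(M^t(G))\ge \phi^{2^{t+1}-2}_{2^{t+1}}(G)$.
   Context: For $G$ with $V(G)=\{v_1,\dots,v_n\}$, the Mycielskian $M(G)$ has vertex set $\{v_1,\dots,v_n\}\cup\{v'_1,\dots,v'_n\}\cup\{z\}$ and edge set $E(G)\cup\{v'_iv_j: v_iv_j\in E(G)\}\cup\{zv'_i: 1\le i\le n\}$. $M^1(G)=M(G)$ and $M^t(G)=M(M^{t-1}(G))$ for $t\ge2$. An independent set $F$ of $G$ is free if it is contained in at least two distinct maximal independent sets; an edge $uv$ supports $F$ if $F\cap(N(u)\cup N(v))=\emptyset$. For integers $a\ge0,b\ge1$, $\phi^a_b(G)$ is the minimum $t$ such that $V(G)$ is partitioned into independent sets $V_1,\dots,V_t$ with $V_1,\dots,V_{t-a}$ free, and there are edges $e_1,\dots,e_{t-a}$ (not necessarily distinct) with $e_i$ supporting $V_i$ and every vertex incident with at most $b$ of $e_1,\dots,e_{t-a}$; $\phi^a_b(G)=\infty$ if no such $t$ exists. *)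

theory Defs
  imports Main "HOL-Library.Extended_Nat"
begin

record 'v graph =
  verts :: "'v set"
  edges :: "'v set set"

definition finite_graph :: "('v, 'm) graph_scheme \<Rightarrow> bool" where
  "finite_graph G \<longleftrightarrow> finite (verts G) \<and>
     (\<forall>e\<in>edges G. \<exists>u v. u \<noteq> v \<and> e = {u, v} \<and> u \<in> verts G \<and> v \<in> verts G)"

definition nbhd :: "'v graph \<Rightarrow> 'v \<Rightarrow> 'v set" where
  "nbhd G u = {w. {u, w} \<in> edges G}"

definition indep :: "'v graph \<Rightarrow> 'v set \<Rightarrow> bool" where
  "indep G S \<longleftrightarrow> S \<subseteq> verts G \<and> (\<forall>u\<in>S. \<forall>w\<in>S. {u, w} \<notin> edges G)"

definition max_indep :: "'v graph \<Rightarrow> 'v set \<Rightarrow> bool" where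
  "max_indep G S \<longleftrightarrow> indep G S \<and> (\<forall>T. indep G T \<and> S \<subseteq> T \<longrightarrow> T = S)"

definition free_set :: "'v graph \<Rightarrow> 'v set \<Rightarrow> bool" where
  "free_set G F \<longleftrightarrow> indep G F \<and>
     (\<exists>S1 S2. S1 \<noteq> S2 \<and> max_indep G S1 \<and> max_indep G S2 \<and> F \<subseteq> S1 \<and> F \<subseteq> S2)"

definition supports :: "'v graph \<Rightarrow> 'v set \<Rightarrow> 'v set \<Rightarrow> bool" where
  "supports G e F \<longleftrightarrow> e \<in> edges G \<and> (\<forall>u\<in>e. F \<inter> nbhd G u = {})"

definition phi_ok :: "nat \<Rightarrow> nat \<Rightarrow> 'v graph \<Rightarrow> nat \<Rightarrow> bool" where
  "phi_ok a b G t \<longleftrightarrow> (\<exists>P :: nat \<Rightarrow> 'v set. \<exists>e :: nat \<Rightarrow> 'v set.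
      (\<Union>i<t. P i) = verts G \<and>
      (\<forall>i<t. P i \<noteq> {} \<and> indep G (P i)) \<and>
      (\<forall>i<t. \<forall>j<t. i \<noteq> j \<longrightarrow> P i \<inter> P j = {}) \<and>
      (\<forall>i<t - a. free_set G (P i) \<and> supports G (e i) (P i)) \<and>
      (\<forall>v. card {i. i < t - a \<and> v \<in> e i} \<le> b))"

definition phi :: "nat \<Rightarrow> nat \<Rightarrow> 'v graph \<Rightarrow> enat" where
  "phi a b G = (INF t\<in>{t. phi_ok a b G t}. enat t)"

text \<open>Vertex type closed under the Mycielski construction.\<close>
datatype 'a mv = Base 'a | Old "'a mv" | New "'a mv" | Apex

definition mycielskian :: "'a mv graph \<Rightarrow> 'a mv graph" where
  "mycielskian G = \<lparr> verts = Old ` verts G \<union> New ` verts G \<union> {Apex},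
     edges = {{Old x, Old y} | x y. {x, y} \<in> edges G}
           \<union> {{New x, Old y} | x y. {x, y} \<in> edges G}
           \<union> {{Apex, New x} | x. x \<in> verts G} \<rparr>"

end

theory Submission
  imports Defs
begin

lemma fg_edge:
  assumes "finite_graph G" "e \<in> edges G"
  obtains u v where "u \<noteq> v" "e = {u, v}" "u \<in> verts G" "v \<in> verts G"
  using assms unfolding finite_graph_def by blast

lemma ext_max_indep:
  assumes "finite_graph G" "indep G S"
  shows "\<exists>T. max_indep G T \<and> S \<subseteq> T"
proof -
  let ?A = "{T. indep G T \<and> S \<subseteq> T}"
  have fin: "finite ?A"
    using assms(1) unfolding finite_graph_def indep_def
    by (rule_tac finite_subset[of _ "Pow (verts G)"]) auto
  have ne: "?A \<noteq> {}" using assms(2) by auto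
  obtain m where m: "m \<in> ?A" "\<forall>b\<in>?A. m \<le> b \<longrightarrow> m = b"
    using finite_has_maximal[OF fin ne] by blast
  have "max_indep G m"
    unfolding max_indep_def using m by auto
  then show ?thesis using m by auto
qed

lemma supports_free:
  assumes fg: "finite_graph G" and ind: "indep G F" and sup: "supports G e F"
  shows "free_set G F"
proof -
  have eE: "e \<in> edges G" and nb: "\<forall>u\<in>e. F \<inter> nbhd G u = {}"
    using sup unfolding supports_def by auto
  obtain u v where uv: "u \<noteq> v" "e = {u, v}" "u \<in> verts G" "v \<in> verts G"
    using fg_edge[OF fg eE] by blast
  have noloop: "\<And>x. {x} \<notin> edges G"
    using fg unfolding finite_graph_def by (metis doubleton_eq_iff insert_absorb2)
  have Fu: "F \<inter> nbhd G u = {}" and Fv: "F \<inter> nbhd G v = {}" using nb uv by auto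
  have vnu: "v \<in> nbhd G u" using eE uv unfolding nbhd_def by auto
  have unv: "u \<in> nbhd G v" using eE uv unfolding nbhd_def by (auto simp: insert_commute)
  have uF: "u \<notin> F" using Fv unv by auto
  have vF: "v \<notin> F" using Fu vnu by auto
  have iu: "indep G (insert u F)"
    using ind Fu uv noloop unfolding indep_def nbhd_def
    by (auto simp: insert_commute)
  have iv: "indep G (insert v F)"
    using ind Fv uv noloop unfolding indep_def nbhd_def
    by (auto simp: insert_commute)
  obtain S1 where S1: "max_indep G S1" "insert u F \<subseteq> S1" using ext_max_indep[OF fg iu] by blast
  obtain S2 where S2: "max_indep G S2" "insert v F \<subseteq> S2" using ext_max_indep[OF fg iv] by blast
  have "S1 \<noteq> S2"
  proof
    assume "S1 = S2"
    then have "u \<in> S1" "v \<in> S1" using S1 S2 by auto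
    then show False using S1(1) eE uv unfolding max_indep_def indep_def by auto
  qed
  then show ?thesis unfolding free_set_def using ind S1 S2 by blast
qed

lemma reindex:
  assumes fg: "finite_graph G"
    and cover: "(\<Union>i<t. W i) = verts G"
    and ind: "\<forall>i<t. indep G (W i)"
    and disj: "\<forall>i<t. \<forall>j<t. i \<noteq> j \<longrightarrow> W i \<inter> W j = {}"
    and good: "Good \<subseteq> {..<t}"
    and sup: "\<forall>i\<in>Good. supports G (f i) (W i)"
    and bad: "card ({..<t} - Good) \<le> c"
    and mult: "\<forall>v. card {i\<in>Good. v \<in> f i} \<le> B"
  shows "\<exists>t'\<le>t. phi_ok c B G t'"
proof -
  define N where "N = {i. i < t \<and> W i \<noteq> {}}"
  define GN where "GN = Good \<inter> N"
  define BN where "BN = N - Good"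
  define L where "L = sorted_list_of_set GN @ sorted_list_of_set BN"
  have finN: "finite N" unfolding N_def by auto
  have finGN: "finite GN" "finite BN" using finN unfolding GN_def BN_def by auto
  have dL: "distinct L" unfolding L_def using finGN unfolding GN_def BN_def by auto
  have sL: "set L = N" unfolding L_def using finGN unfolding GN_def BN_def by auto
  define t' where "t' = length L"
  have t'N: "t' = card N" unfolding t'_def using dL sL distinct_card by fastforce
  have t'le: "t' \<le> t" unfolding t'N N_def by (rule order_trans[OF card_mono[of "{..<t}"]]) auto
  have cardN: "card N = card GN + card BN"
    unfolding GN_def BN_def using finN
    by (metis Diff_Diff_Int card_Diff_subset_Int card_Int_Diff finite_Int inf_commute)
  have cBN: "card BN \<le> c"
    using bad unfolding BN_def N_def
    by (rule_tac order_trans[OF card_mono]) auto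
  have lenGN: "length (sorted_list_of_set GN) = card GN" by simp
  have Lset: "\<And>j. j < t' \<Longrightarrow> L ! j \<in> N" using sL t'_def nth_mem by blast
  have Lgood: "\<And>j. j < t' - c \<Longrightarrow> L ! j \<in> Good"
  proof -
    fix j assume j: "j < t' - c"
    then have "j < card GN" using t'N cardN cBN by linarith
    then have "L ! j = sorted_list_of_set GN ! j" unfolding L_def by (simp add: nth_append)
    also have "\<dots> \<in> GN" using \<open>j < card GN\<close> finGN
      by (metis lenGN nth_mem set_sorted_list_of_set)
    finally show "L ! j \<in> Good" unfolding GN_def by auto
  qed
  have "phi_ok c B G t'"
    unfolding phi_ok_def
  proof (intro exI conjI allI impI)
    show "(\<Union>j<t'. W (L ! j)) = verts G"
    proof -
      have "(\<Union>j<t'. W (L ! j)) = (\<Union>i\<in>set L. W i)"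
        unfolding t'_def by (auto simp: in_set_conv_nth) (metis nth_mem)
      also have "\<dots> = (\<Union>i<t. W i)" unfolding sL N_def by auto
      finally show ?thesis using cover by simp
    qed
  next
    fix j assume "j < t'"
    then show "W (L ! j) \<noteq> {}" "indep G (W (L ! j))"
      using Lset ind unfolding N_def by auto
  next
    fix i j assume "i < t'" "j < t'" "i \<noteq> j"
    then have "L ! i \<noteq> L ! j" using dL unfolding t'_def by (simp add: nth_eq_iff_index_eq)
    then show "W (L ! i) \<inter> W (L ! j) = {}" using disj Lset \<open>i < t'\<close> \<open>j < t'\<close>
      unfolding N_def by auto
  next
    fix j assume j: "j < t' - c"
    then have "L ! j \<in> Good" by (rule Lgood)
    then show "supports G (f (L ! j)) (W (L ! j))" using sup by auto
    then show "free_set G (W (L ! j))"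
      using supports_free[OF fg] ind Lset j unfolding N_def by auto
  next
    fix v
    have "card {j. j < t' - c \<and> v \<in> f (L ! j)} \<le> card {i\<in>Good. v \<in> f i}"
    proof (rule card_inj_on_le[where f="\<lambda>j. L ! j"])
      show "inj_on ((!) L) {j. j < t' - c \<and> v \<in> f (L ! j)}"
        using dL unfolding t'_def inj_on_def by (auto simp: nth_eq_iff_index_eq)
      show "(!) L ` {j. j < t' - c \<and> v \<in> f (L ! j)} \<subseteq> {i \<in> Good. v \<in> f i}"
        using Lgood by auto
      show "finite {i \<in> Good. v \<in> f i}"
        using good by (rule_tac finite_subset[of _ "{..<t}"]) auto
    qed
    then show "card {j. j < t' - c \<and> v \<in> f (L ! j)} \<le> B" using mult order_trans by blast
  qed
  then show ?thesis using t'le by blast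
qed

fun proj :: "'a mv \<Rightarrow> 'a mv" where
  "proj (Old x) = x" | "proj (New x) = x" | "proj (Base x) = Base x" | "proj Apex = Apex"

lemma myc_finite:
  assumes "finite_graph G" shows "finite_graph (mycielskian G)"
proof -
  have "\<And>x y. {x, y} \<in> edges G \<Longrightarrow> x \<noteq> y \<and> x \<in> verts G \<and> y \<in> verts G"
    using assms unfolding finite_graph_def by (metis doubleton_eq_iff)
  note h = this
  have "\<exists>u v. u \<noteq> v \<and> e = {u, v} \<and> u \<in> verts (mycielskian G) \<and> v \<in> verts (mycielskian G)"
    if "e \<in> edges (mycielskian G)" for e
  proof -
    have "(\<exists>x y. {x, y} \<in> edges G \<and> e = {Old x, Old y}) \<or> (\<exists>x y. {x, y} \<in> edges G \<and> e = {New x, Old y})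
      \<or> (\<exists>x. x \<in> verts G \<and> e = {Apex, New x})"
      using that unfolding mycielskian_def by auto
    then show ?thesis
    proof (elim disjE exE conjE)
      fix x y assume "{x, y} \<in> edges G" "e = {Old x, Old y}"
      then show ?thesis using h[of x y] by (rule_tac x="Old x" in exI, rule_tac x="Old y" in exI) (auto simp: mycielskian_def)
    next
      fix x y assume "{x, y} \<in> edges G" "e = {New x, Old y}"
      then show ?thesis using h[of x y] by (rule_tac x="New x" in exI, rule_tac x="Old y" in exI) (auto simp: mycielskian_def)
    next
      fix x assume "x \<in> verts G" "e = {Apex, New x}"
      then show ?thesis by (rule_tac x="Apex" in exI, rule_tac x="New x" in exI) (auto simp: mycielskian_def)
    qed
  qed
  moreover have "finite (verts (mycielskian G))" using assms unfolding finite_graph_def mycielskian_def by auto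
  ultimately show ?thesis unfolding finite_graph_def by blast
qed

lemma myc_edge_noapex:
  assumes "e \<in> edges (mycielskian G)" "Apex \<notin> e"
  shows "\<exists>x y. {x, y} \<in> edges G \<and> (e = {Old x, Old y} \<or> e = {New x, Old y})"
  using assms unfolding mycielskian_def by auto

lemma part1_ok:
  assumes fg: "finite_graph G" and ok: "phi_ok a b (mycielskian G) t"
  shows "\<exists>t'\<le>t. phi_ok (a + b) (2 * b) G t'"
proof -
  let ?M = "mycielskian G"
  obtain P e where
    cov: "(\<Union>i<t. P i) = verts ?M" and
    ind: "\<forall>i<t. P i \<noteq> {} \<and> indep ?M (P i)" and
    dis: "\<forall>i<t. \<forall>j<t. i \<noteq> j \<longrightarrow> P i \<inter> P j = {}" and
    sup: "\<forall>i<t - a. free_set ?M (P i) \<and> supports ?M (e i) (P i)" and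
    mul: "\<forall>v. card {i. i < t - a \<and> v \<in> e i} \<le> b"
    using ok unfolding phi_ok_def by blast
  define W where "W i = {v. Old v \<in> P i}" for i
  define Good where "Good = {i. i < t - a \<and> Apex \<notin> e i}"
  define f where "f i = proj ` e i" for i
  have vM: "verts ?M = Old ` verts G \<union> New ` verts G \<union> {Apex}" by (simp add: mycielskian_def)
  have eOO: "\<And>x y. {x, y} \<in> edges G \<Longrightarrow> {Old x, Old y} \<in> edges ?M"
    by (auto simp: mycielskian_def)
  have eNO: "\<And>x y. {x, y} \<in> edges G \<Longrightarrow> {New x, Old y} \<in> edges ?M"
    by (auto simp: mycielskian_def)
  have "\<exists>t'\<le>t. phi_ok (a + b) (2 * b) G t'"
  proof (rule reindex[OF fg, where W=W and Good=Good and f=f])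
    show "(\<Union>i<t. W i) = verts G"
    proof
      show "(\<Union>i<t. W i) \<subseteq> verts G"
        using cov vM unfolding W_def by blast
      show "verts G \<subseteq> (\<Union>i<t. W i)"
      proof
        fix v assume "v \<in> verts G"
        then have "Old v \<in> verts ?M" using vM by auto
        then show "v \<in> (\<Union>i<t. W i)" using cov unfolding W_def by auto
      qed
    qed
    show "\<forall>i<t. indep G (W i)"
    proof (intro allI impI)
      fix i assume "i < t"
      then have ii: "indep ?M (P i)" using ind by auto
      have "W i \<subseteq> verts G" using ii vM unfolding indep_def W_def by auto
      then show "indep G (W i)" using ii eOO unfolding indep_def W_def by blast
    qed
    show "\<forall>i<t. \<forall>j<t. i \<noteq> j \<longrightarrow> W i \<inter> W j = {}"
      using dis unfolding W_def by blast
    show "Good \<subseteq> {..<t}" unfolding Good_def by auto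
    show "\<forall>i\<in>Good. supports G (f i) (W i)"
    proof
      fix i assume iG: "i \<in> Good"
      then have it: "i < t - a" and nA: "Apex \<notin> e i" unfolding Good_def by auto
      have sM: "supports ?M (e i) (P i)" using sup it by auto
      then have eiM: "e i \<in> edges ?M" and nb: "\<forall>u\<in>e i. P i \<inter> nbhd ?M u = {}"
        unfolding supports_def by auto
      obtain x y where xy: "{x, y} \<in> edges G" "e i = {Old x, Old y} \<or> e i = {New x, Old y}"
        using myc_edge_noapex[OF eiM nA] by blast
      have fi: "f i = {x, y}" using xy(2) unfolding f_def by (elim disjE) simp_all
      have key: "\<And>u p. p \<in> e i \<Longrightarrow> p = Old u \<or> p = New u \<Longrightarrow> W i \<inter> nbhd G u = {}"
      proof -
        fix u p assume p: "p \<in> e i" "p = Old u \<or> p = New u"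
        show "W i \<inter> nbhd G u = {}"
        proof (rule ccontr)
          assume "W i \<inter> nbhd G u \<noteq> {}"
          then obtain w where "w \<in> W i" "w \<in> nbhd G u" by blast
          then have w: "Old w \<in> P i" "{u, w} \<in> edges G"
            unfolding W_def nbhd_def by simp_all
          have "{p, Old w} \<in> edges ?M" using p(2) eOO[OF w(2)] eNO[OF w(2)] by blast
          then have "Old w \<in> nbhd ?M p" unfolding nbhd_def by simp
          then show False using nb p(1) w(1) by auto
        qed
      qed
      show "supports G (f i) (W i)"
        unfolding supports_def fi
        using xy key by auto
    qed
    show "card ({..<t} - Good) \<le> a + b"
    proof -
      have "{..<t} - Good \<subseteq> {t - a..<t} \<union> {i. i < t - a \<and> Apex \<in> e i}"
        unfolding Good_def by auto
      then have "card ({..<t} - Good) \<le> card ({t - a..<t} \<union> {i. i < t - a \<and> Apex \<in> e i})"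
        by (rule card_mono[rotated]) auto
      also have "\<dots> \<le> card {t - a..<t} + card {i. i < t - a \<and> Apex \<in> e i}"
        by (rule card_Un_le)
      also have "\<dots> \<le> a + b" using mul[rule_format, of Apex] by simp
      finally show ?thesis .
    qed
    show "\<forall>v. card {i \<in> Good. v \<in> f i} \<le> 2 * b"
    proof
      fix v
      have sub: "{i \<in> Good. v \<in> f i} \<subseteq> {i. i < t - a \<and> Old v \<in> e i} \<union> {i. i < t - a \<and> New v \<in> e i}"
      proof
        fix i assume "i \<in> {i \<in> Good. v \<in> f i}"
        then have it: "i < t - a" and nA: "Apex \<notin> e i" and vf: "v \<in> f i" unfolding Good_def by auto
        have eiM: "e i \<in> edges ?M" using sup it unfolding supports_def by auto
        obtain x y where xy: "{x, y} \<in> edges G" "e i = {Old x, Old y} \<or> e i = {New x, Old y}"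
          using myc_edge_noapex[OF eiM nA] by blast
        have "f i = {x, y}" using xy(2) unfolding f_def by (elim disjE) simp_all
        then have "v = x \<or> v = y" using vf by simp
        then have "Old v \<in> e i \<or> New v \<in> e i" using xy(2) by (elim disjE) simp_all
        then show "i \<in> {i. i < t - a \<and> Old v \<in> e i} \<union> {i. i < t - a \<and> New v \<in> e i}"
          using it by simp
      qed
      have "card {i \<in> Good. v \<in> f i} \<le> card ({i. i < t - a \<and> Old v \<in> e i} \<union> {i. i < t - a \<and> New v \<in> e i})"
        by (rule card_mono[OF _ sub]) auto
      also have "\<dots> \<le> card {i. i < t - a \<and> Old v \<in> e i} + card {i. i < t - a \<and> New v \<in> e i}"
        by (rule card_Un_le)
      also have "\<dots> \<le> 2 * b" using mul[rule_format, of "Old v"] mul[rule_format, of "New v"] by simp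
      finally show "card {i \<in> Good. v \<in> f i} \<le> 2 * b" .
    qed
  qed
  then show ?thesis .
qed

lemma part1:
  assumes fg: "finite_graph G"
  shows "phi (a + b) (2 * b) G \<le> phi a b (mycielskian G)"
  unfolding phi_def[of a b]
proof (rule INF_greatest)
  fix t assume "t \<in> {t. phi_ok a b (mycielskian G) t}"
  then obtain t' where t': "t' \<le> t" "phi_ok (a + b) (2 * b) G t'"
    using part1_ok[OF fg] by blast
  have "phi (a + b) (2 * b) G \<le> enat t'"
    unfolding phi_def using t'(2) by (rule_tac INF_lower) auto
  also have "\<dots> \<le> enat t" using t'(1) by simp
  finally show "phi (a + b) (2 * b) G \<le> enat t" .
qed

lemma arith_aux: "(m::nat) \<ge> 1 \<Longrightarrow> b + 2 * b * (m - 1) = b * (2 * m - 1)"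
  by (cases m) (auto simp: algebra_simps)

lemma iter:
  assumes fg: "finite_graph G"
  shows "finite_graph ((mycielskian ^^ k) G) \<and>
    phi (a + b * (2 ^ k - 1)) (b * 2 ^ k) G \<le> phi a b ((mycielskian ^^ k) G)"
proof (induction k arbitrary: a b)
  case 0 then show ?case using fg by simp
next
  case (Suc k)
  have IH: "finite_graph ((mycielskian ^^ k) G)"
    "phi (a + b + 2 * b * (2 ^ k - 1)) (2 * b * 2 ^ k) G \<le> phi (a + b) (2 * b) ((mycielskian ^^ k) G)"
    using Suc.IH[of "a + b" "2 * b"] by auto
  have p2: "(2::nat) ^ Suc k = 2 * 2 ^ k" by simp
  have eq1: "a + b + 2 * b * (2 ^ k - 1) = a + b * (2 ^ Suc k - 1)"
    unfolding p2 using arith_aux[of "2 ^ k" b] by simp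
  have eq2: "2 * b * 2 ^ k = b * 2 ^ Suc k" unfolding p2 by simp
  have M: "(mycielskian ^^ Suc k) G = mycielskian ((mycielskian ^^ k) G)" by simp
  show ?case
  proof
    show "finite_graph ((mycielskian ^^ Suc k) G)" unfolding M by (rule myc_finite[OF IH(1)])
    have "phi (a + b * (2 ^ Suc k - 1)) (b * 2 ^ Suc k) G
        = phi (a + b + 2 * b * (2 ^ k - 1)) (2 * b * 2 ^ k) G" unfolding eq1 eq2 ..
    also have "\<dots> \<le> phi (a + b) (2 * b) ((mycielskian ^^ k) G)" by (rule IH(2))
    also have "\<dots> \<le> phi a b (mycielskian ((mycielskian ^^ k) G))" by (rule part1[OF IH(1)])
    finally show "phi (a + b * (2 ^ Suc k - 1)) (b * 2 ^ Suc k) G \<le> phi a b ((mycielskian ^^ Suc k) G)"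
      unfolding M .
  qed
qed

theorem mainTheorem8:
  fixes G :: "'a mv graph" and a b :: nat
  assumes "finite_graph G" and "b \<ge> 1"
  shows "phi a b (mycielskian G) \<ge> phi (a + b) (2 * b) G \<and>
         (\<forall>t::nat. t \<ge> 1 \<longrightarrow>
           phi 0 2 ((mycielskian ^^ t) G) \<ge> phi (2 ^ (t + 1) - 2) (2 ^ (t + 1)) G)"
proof (intro conjI allI impI)
  show "phi (a + b) (2 * b) G \<le> phi a b (mycielskian G)" by (rule part1[OF assms(1)])
next
  fix t :: nat assume "t \<ge> 1"
  have h: "phi (0 + 2 * (2 ^ t - 1)) (2 * 2 ^ t) G \<le> phi 0 2 ((mycielskian ^^ t) G)"
    using iter[OF assms(1), of t 0 2] by blast
  have p: "(2::nat) ^ (t + 1) = 2 * 2 ^ t" by simp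
  have q: "0 + 2 * (2 ^ t - 1) = 2 * (2::nat) ^ t - 2" by simp
  show "phi (2 ^ (t + 1) - 2) (2 ^ (t + 1)) G \<le> phi 0 2 ((mycielskian ^^ t) G)"
    using h unfolding p q .
qed

end
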